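(* Let $\mathcal G=(V_{\min},V_{\max},E,w,\lambda)$ be a discounted payoff game, $\sigma,\sigma'$ joint strategies, and let $\nu$ be a valuation satisfying $H$ that minimises $f_\sigma$ over all solutions of $H$. If $f_{\sigma'}(\nu)<f_\sigma(\nu)$, then $\sigma'$ is better than $\sigma$.
   Context: A discounted payoff game is a tuple $\mathcal G=(V_{\min},V_{\max},E,w,\lambda)$ with $V=V_{\min}\cup V_{\max}$ finite (disjoint union), $E\subseteq V\times V$ with every vertex having an outgoing edge, $w:E\to\mathbb R$, $\lambda:E\to[0,1)$. A joint strategy is a map $\sigma:V\to V$ with $(v,\sigma(v))\in E$ for all $v$. $H$ is the system of inequations over $x\in\mathbb R^V$ containing, for each edge $e=(v,v')$, $x(v)\ge w_e+\lambda_e x(v')$ if $v\in V_{\max}$ and $x(v)\le w_e+\lambda_e x(v')$ if $v\in V_{\min}$. $\mathsf{offset}(x,(v,v'))=x(v)-(w_{(v,v')}+\lambda_{(v,v')}x(v'))$ if $v\in V_{\max}$, and $(w_{(v,v')}+\lambda_{(v,v')}x(v'))-x(v)$ otherwise. $f_\sigma(x)=\sum_{v\in V}\mathsf{offset}(x,(v,\sigma(v)))$. A joint strategy $\sigma'$ is better than $\sigma$ iff $\min\{f_{\sigma'}(x)\mid x \text{ solves } H\}<\min\{f_{\sigma}(x)\mid x\text{ solves } H\}$. *)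

theory Defs
  imports "HOL-Analysis.Analysis"
begin

definition dpg :: "'v::finite set \<Rightarrow> 'v set \<Rightarrow> ('v \<times> 'v) set \<Rightarrow> ('v \<times> 'v \<Rightarrow> real)
                    \<Rightarrow> ('v \<times> 'v \<Rightarrow> real) \<Rightarrow> bool" where
  "dpg Vmin Vmax E w lam \<longleftrightarrow>
     Vmin \<inter> Vmax = {} \<and> Vmin \<union> Vmax = UNIV \<and>
     (\<forall>v. \<exists>v'. (v, v') \<in> E) \<and>
     (\<forall>e\<in>E. 0 \<le> lam e \<and> lam e < 1)"

definition joint_strategy :: "('v \<times> 'v) set \<Rightarrow> ('v \<Rightarrow> 'v) \<Rightarrow> bool" where
  "joint_strategy E \<sigma> \<longleftrightarrow> (\<forall>v. (v, \<sigma> v) \<in> E)"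

definition solves_H :: "'v set \<Rightarrow> 'v set \<Rightarrow> ('v \<times> 'v) set \<Rightarrow> ('v \<times> 'v \<Rightarrow> real)
                    \<Rightarrow> ('v \<times> 'v \<Rightarrow> real) \<Rightarrow> ('v \<Rightarrow> real) \<Rightarrow> bool" where
  "solves_H Vmin Vmax E w lam x \<longleftrightarrow>
     (\<forall>(v, v')\<in>E. (v \<in> Vmax \<longrightarrow> x v \<ge> w (v, v') + lam (v, v') * x v') \<and>
                  (v \<in> Vmin \<longrightarrow> x v \<le> w (v, v') + lam (v, v') * x v'))"

definition offset :: "'v set \<Rightarrow> ('v \<times> 'v \<Rightarrow> real) \<Rightarrow> ('v \<times> 'v \<Rightarrow> real)
                    \<Rightarrow> ('v \<Rightarrow> real) \<Rightarrow> 'v \<times> 'v \<Rightarrow> real" where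
  "offset Vmax w lam x e =
     (if fst e \<in> Vmax then x (fst e) - (w e + lam e * x (snd e))
      else (w e + lam e * x (snd e)) - x (fst e))"

definition f_strat :: "'v::finite set \<Rightarrow> ('v \<times> 'v \<Rightarrow> real) \<Rightarrow> ('v \<times> 'v \<Rightarrow> real)
                    \<Rightarrow> ('v \<Rightarrow> 'v) \<Rightarrow> ('v \<Rightarrow> real) \<Rightarrow> real" where
  "f_strat Vmax w lam \<sigma> x = (\<Sum>v\<in>UNIV. offset Vmax w lam x (v, \<sigma> v))"

text \<open>min{f_sigma(x) | x solves H}; all offsets are nonnegative on solutions,
  so the set is bounded below and Inf is the minimum whenever it is attained.\<close>
definition opt_val :: "'v::finite set \<Rightarrow> 'v set \<Rightarrow> ('v \<times> 'v) set \<Rightarrow> ('v \<times> 'v \<Rightarrow> real)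
                    \<Rightarrow> ('v \<times> 'v \<Rightarrow> real) \<Rightarrow> ('v \<Rightarrow> 'v) \<Rightarrow> real" where
  "opt_val Vmin Vmax E w lam \<sigma> =
     Inf {f_strat Vmax w lam \<sigma> x | x. solves_H Vmin Vmax E w lam x}"

definition better :: "'v::finite set \<Rightarrow> 'v set \<Rightarrow> ('v \<times> 'v) set \<Rightarrow> ('v \<times> 'v \<Rightarrow> real)
                    \<Rightarrow> ('v \<times> 'v \<Rightarrow> real) \<Rightarrow> ('v \<Rightarrow> 'v) \<Rightarrow> ('v \<Rightarrow> 'v) \<Rightarrow> bool" where
  "better Vmin Vmax E w lam \<sigma>' \<sigma> \<longleftrightarrow>
     opt_val Vmin Vmax E w lam \<sigma>' < opt_val Vmin Vmax E w lam \<sigma>"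

end

theory Submission
  imports Defs
begin

lemma offset_nonneg:
  assumes "dpg Vmin Vmax E w lam" "solves_H Vmin Vmax E w lam x" "(v, v') \<in> E"
  shows "0 \<le> offset Vmax w lam x (v, v')"
proof -
  have "v \<in> Vmin \<or> v \<in> Vmax" using assms(1) unfolding dpg_def by blast
  moreover have "(v \<in> Vmax \<longrightarrow> x v \<ge> w (v, v') + lam (v, v') * x v') \<and>
                  (v \<in> Vmin \<longrightarrow> x v \<le> w (v, v') + lam (v, v') * x v')"
    using assms(2,3) unfolding solves_H_def by blast
  ultimately show ?thesis unfolding offset_def by auto
qed

theorem lemma4p1:
  fixes Vmin Vmax :: "'v::finite set" and E :: "('v \<times> 'v) set"
    and w lam :: "'v \<times> 'v \<Rightarrow> real" and \<sigma> \<sigma>' :: "'v \<Rightarrow> 'v" and \<nu> :: "'v \<Rightarrow> real"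
  assumes "dpg Vmin Vmax E w lam"
    and "joint_strategy E \<sigma>" and "joint_strategy E \<sigma>'"
    and "solves_H Vmin Vmax E w lam \<nu>"
    and "\<forall>x. solves_H Vmin Vmax E w lam x \<longrightarrow> f_strat Vmax w lam \<sigma> \<nu> \<le> f_strat Vmax w lam \<sigma> x"
    and "f_strat Vmax w lam \<sigma>' \<nu> < f_strat Vmax w lam \<sigma> \<nu>"
  shows "better Vmin Vmax E w lam \<sigma>' \<sigma>"
proof -
  let ?S = "{f_strat Vmax w lam \<sigma> x | x. solves_H Vmin Vmax E w lam x}"
  let ?S' = "{f_strat Vmax w lam \<sigma>' x | x. solves_H Vmin Vmax E w lam x}"
  have "f_strat Vmax w lam \<sigma> \<nu> \<in> ?S" using assms(4) by blast
  moreover have "\<And>y. y \<in> ?S \<Longrightarrow> f_strat Vmax w lam \<sigma> \<nu> \<le> y" using assms(5) by blast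
  ultimately have "Inf ?S = f_strat Vmax w lam \<sigma> \<nu>"
    by (intro cInf_eq_minimum) auto
  have bdd: "bdd_below ?S'"
  proof (rule bdd_belowI[of _ 0])
    fix y assume "y \<in> ?S'"
    then obtain x where x: "solves_H Vmin Vmax E w lam x" "y = f_strat Vmax w lam \<sigma>' x" by blast
    have "\<And>v. 0 \<le> offset Vmax w lam x (v, \<sigma>' v)"
      using offset_nonneg[OF assms(1) x(1)] assms(3) unfolding joint_strategy_def by blast
    then show "0 \<le> y" unfolding x f_strat_def by (simp add: sum_nonneg)
  qed
  have "f_strat Vmax w lam \<sigma>' \<nu> \<in> ?S'" using assms(4) by blast
  then have "Inf ?S' \<le> f_strat Vmax w lam \<sigma>' \<nu>" using bdd by (rule cInf_lower)
  then show ?thesis unfolding better_def opt_val_def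
    using \<open>Inf ?S = _\<close> assms(6) by linarith
qed

end
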